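(* For every $N\ge1$, the symmetric matrix $$\bar A*\hat{\mathcal{H}}'+\frac{1}{\max(N-1,1)}\big(N\bar A'-\bar A\big)*(\hat{\mathcal{H}}''-\hat{\mathcal{H}}')$$ is positive semi-definite.
   Context: Fix layer widths $C_0,\dots,C_L$ and a mini-batch size $N\ge1$. For $l=1,\dots,L$, let $\bar a_{l-1}\in\mathbb{R}^{(C_{l-1}+1)\times N}$ be square-integrable random matrices (activations with a row of ones appended). For each $n\in\{1,\dots,N\}$ and $l\in\{1,\dots,L\}$, let $g^{(n)}_l\in\mathbb{R}^{C_l\times N}$ be square-integrable random matrices. Here $(g^{(n)}_l)_{a,m}$ stands for the gradient $\partial\mathcal{L}_n/\partial(h_l)_{a,m}$ of the $n$-th example's loss with respect to the pre-activation entry $(a,m)$ of layer $l$. $\mathbb{E}$ denotes expectation, and $\mathbb{E}_n[\cdot]=\frac1N\sum_{n=1}^N[\cdot]$. Define block matrices, with $\{M\}_{l,l'}$ denoting block $(l,l')$, by: - $(\{\bar A\}_{l,l'})_{b,d}=\mathbb{E}\big[\mathbb{E}_n[(\bar a_{l-1})_{b,n}(\bar a_{l'-1})_{d,n}]\big]$; - $(\{\bar A'\}_{l,l'})_{b,d}=\mathbb{E}\big[\mathbb{E}_n[(\bar a_{l-1})_{b,n}]\,\mathbb{E}_n[(\bar a_{l'-1})_{d,n}]\big]$; - $(\{\hat{\mathcal{H}}'\}_{l,l'})_{a,c}=\mathbb{E}\big[\mathbb{E}_n[\sum_{m}(g^{(n)}_l)_{a,m}(g^{(n)}_{l'})_{c,m}]\big]$;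 - $(\{\hat{\mathcal{H}}''\}_{l,l'})_{a,c}=\mathbb{E}\big[\mathbb{E}_n[(\sum_{m}(g^{(n)}_l)_{a,m})(\sum_{m}(g^{(n)}_{l'})_{c,m})]\big]$. For block matrices $P,Q$ with the same block layout, the Khatri–Rao product $P*Q$ is the block matrix with blocks $\{P*Q\}_{l,l'}=\{P\}_{l,l'}\otimes\{Q\}_{l,l'}$, where $\otimes$ is the Kronecker product. *)

theory Defs
  imports "HOL-Probability.Probability"
begin

definition En :: "nat \<Rightarrow> (nat \<Rightarrow> real) \<Rightarrow> real" where
  "En N f = (\<Sum>n<N. f n) / real N"

text \<open>Activations: abar j w b n is the entry (b,n) of the random matrix \<open>\<bar>a_j\<close>
  (rows b = 0..C j, columns n = 0..N-1) at sample point w.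
  Gradients: g n l w a m is the entry (a,m) of \<open>g^(n)_l\<close> at w.
  Layers l range over 1..L; blocks are indexed by (l,l').\<close>

definition Abar_blk :: "'w measure \<Rightarrow> nat \<Rightarrow> (nat \<Rightarrow> 'w \<Rightarrow> nat \<Rightarrow> nat \<Rightarrow> real)
    \<Rightarrow> nat \<Rightarrow> nat \<Rightarrow> nat \<Rightarrow> nat \<Rightarrow> real" where
  "Abar_blk M N abar l l' b d =
     integral\<^sup>L M (\<lambda>w. En N (\<lambda>n. abar (l - 1) w b n * abar (l' - 1) w d n))"

definition Abar'_blk :: "'w measure \<Rightarrow> nat \<Rightarrow> (nat \<Rightarrow> 'w \<Rightarrow> nat \<Rightarrow> nat \<Rightarrow> real)
    \<Rightarrow> nat \<Rightarrow> nat \<Rightarrow> nat \<Rightarrow> nat \<Rightarrow> real" where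
  "Abar'_blk M N abar l l' b d =
     integral\<^sup>L M (\<lambda>w. En N (\<lambda>n. abar (l - 1) w b n) * En N (\<lambda>n. abar (l' - 1) w d n))"

definition H'_blk :: "'w measure \<Rightarrow> nat \<Rightarrow> (nat \<Rightarrow> nat \<Rightarrow> 'w \<Rightarrow> nat \<Rightarrow> nat \<Rightarrow> real)
    \<Rightarrow> nat \<Rightarrow> nat \<Rightarrow> nat \<Rightarrow> nat \<Rightarrow> real" where
  "H'_blk M N g l l' a c =
     integral\<^sup>L M (\<lambda>w. En N (\<lambda>n. \<Sum>m<N. g n l w a m * g n l' w c m))"

definition H''_blk :: "'w measure \<Rightarrow> nat \<Rightarrow> (nat \<Rightarrow> nat \<Rightarrow> 'w \<Rightarrow> nat \<Rightarrow> nat \<Rightarrow> real)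
    \<Rightarrow> nat \<Rightarrow> nat \<Rightarrow> nat \<Rightarrow> nat \<Rightarrow> real" where
  "H''_blk M N g l l' a c =
     integral\<^sup>L M (\<lambda>w. En N (\<lambda>n. (\<Sum>m<N. g n l w a m) * (\<Sum>m<N. g n l' w c m)))"

text \<open>Row/column index set of the block matrices P * Q: triples (l,b,a) with l in 1..L,
  b a row index of the A-type block (0..C(l-1)), a a row index of the H-type block (0..C l - 1).\<close>
definition kr_index :: "(nat \<Rightarrow> nat) \<Rightarrow> nat \<Rightarrow> (nat \<times> nat \<times> nat) set" where
  "kr_index C L = {(l, b, a). 1 \<le> l \<and> l \<le> L \<and> b \<le> C (l - 1) \<and> a < C l}"

text \<open>Khatri-Rao product: block (l,l') is the Kronecker product of the (l,l') blocks;
  the entry ((b,a),(d,c)) of a Kronecker product P\<otimes>Q is P(b,d) * Q(a,c).\<close>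
definition khatri_rao :: "(nat \<Rightarrow> nat \<Rightarrow> nat \<Rightarrow> nat \<Rightarrow> real) \<Rightarrow> (nat \<Rightarrow> nat \<Rightarrow> nat \<Rightarrow> nat \<Rightarrow> real)
    \<Rightarrow> nat \<times> nat \<times> nat \<Rightarrow> nat \<times> nat \<times> nat \<Rightarrow> real" where
  "khatri_rao P Q = (\<lambda>(l, b, a) (l', d, c). P l l' b d * Q l l' a c)"

definition psd_on :: "'i set \<Rightarrow> ('i \<Rightarrow> 'i \<Rightarrow> real) \<Rightarrow> bool" where
  "psd_on I K \<longleftrightarrow> (\<forall>i\<in>I. \<forall>j\<in>I. K i j = K j i) \<and>
     (\<forall>v :: 'i \<Rightarrow> real. 0 \<le> (\<Sum>i\<in>I. \<Sum>j\<in>I. v i * K i j * v j))"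

end

theory Submission
  imports Defs
begin

lemma swapij: "(\<Sum>i\<in>I. \<Sum>j\<in>I. v i * v j * (\<Sum>p\<in>P. F p i j)) = (\<Sum>p\<in>P. \<Sum>i\<in>I. \<Sum>j\<in>I. v i * v j * F p i j)"
  for v :: "'i \<Rightarrow> real"
proof -
  have "(\<Sum>i\<in>I. \<Sum>j\<in>I. v i * v j * (\<Sum>p\<in>P. F p i j)) = (\<Sum>i\<in>I. \<Sum>j\<in>I. \<Sum>p\<in>P. v i * v j * F p i j)"
    by (simp add: sum_distrib_left)
  also have "\<dots> = (\<Sum>i\<in>I. \<Sum>p\<in>P. \<Sum>j\<in>I. v i * v j * F p i j)"
    by (intro sum.cong refl, rule sum.swap)
  also have "\<dots> = (\<Sum>p\<in>P. \<Sum>i\<in>I. \<Sum>j\<in>I. v i * v j * F p i j)"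
    by (rule sum.swap)
  finally show ?thesis .
qed

lemma rank1: "(\<Sum>i\<in>I. \<Sum>j\<in>I. v i * v j * (u i * w j)) = (\<Sum>i\<in>I. v i * u i) * (\<Sum>j\<in>I. v j * w j)"
  for v :: "'i \<Rightarrow> real"
  by (simp add: sum_product mult_ac)

lemma divN: "(\<Sum>i\<in>I. \<Sum>j\<in>I. v i * v j * (X i j / d)) = (\<Sum>i\<in>I. \<Sum>j\<in>I. v i * v j * X i j) / d"
  for v :: "'i \<Rightarrow> real"
  by (simp add: sum_divide_distrib)

lemma lin1: "(\<Sum>i\<in>I. v i * (\<Sum>n\<in>A. y n i)) = (\<Sum>n\<in>A. \<Sum>i\<in>I. v i * y n i)"
  for v :: "'i \<Rightarrow> real"
  unfolding sum_distrib_left by (rule sum.swap)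
lemma lin2: "(\<Sum>i\<in>I. v i * (\<Sum>n\<in>A. \<Sum>m\<in>B. y n m i)) = (\<Sum>n\<in>A. \<Sum>m\<in>B. \<Sum>i\<in>I. v i * y n m i)"
  for v :: "'i \<Rightarrow> real"
  unfolding lin1 by (intro sum.cong refl lin1)
lemma mat_ineq:
  fixes x :: "nat \<Rightarrow> nat \<Rightarrow> real" and N :: nat
  assumes N: "N \<ge> 1"
  shows "0 \<le> real N * (\<Sum>n<N. \<Sum>m<N. (x n m)\<^sup>2) + (\<Sum>n<N. \<Sum>m<N. x n m)\<^sup>2
            - (\<Sum>n<N. (\<Sum>m<N. x n m)\<^sup>2) - (\<Sum>m<N. (\<Sum>n<N. x n m)\<^sup>2)"
proof -
  define R where "R n = (\<Sum>m<N. x n m)" for n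
  define Cc where "Cc m = (\<Sum>n<N. x n m)" for m
  define S where "S = (\<Sum>n<N. \<Sum>m<N. x n m)"
  define y where "y n m = x n m - R n / N" for n m
  have Npos: "real N > 0" using N by simp
  have rowsq: "(\<Sum>m<N. (x n m)\<^sup>2) = (\<Sum>m<N. (y n m)\<^sup>2) + (R n)\<^sup>2 / N" for n
  proof -
    have "(\<Sum>m<N. (x n m)\<^sup>2) = (\<Sum>m<N. (y n m)\<^sup>2 + 2 * (R n / N) * x n m - (R n / N)\<^sup>2)"
      by (rule sum.cong) (auto simp: y_def power2_eq_square algebra_simps)
    also have "\<dots> = (\<Sum>m<N. (y n m)\<^sup>2) + 2 * (R n / N) * R n - N * (R n / N)\<^sup>2"
      by (simp add: sum.distrib sum_subtractf sum_distrib_left R_def)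
    also have "\<dots> = (\<Sum>m<N. (y n m)\<^sup>2) + (R n)\<^sup>2 / N"
      using Npos by (simp add: power2_eq_square field_simps)
    finally show ?thesis .
  qed
  define D where "D m = (\<Sum>n<N. y n m)" for m
  have Deq: "D m = Cc m - S / N" for m
    by (simp add: D_def y_def sum_subtractf Cc_def S_def R_def sum_divide_distrib[symmetric])
  have sumC: "(\<Sum>m<N. Cc m) = S" by (simp add: Cc_def S_def) (metis sum.swap)
  have Dsq: "(\<Sum>m<N. (D m)\<^sup>2) = (\<Sum>m<N. (Cc m)\<^sup>2) - S\<^sup>2 / N"
  proof -
    have "(\<Sum>m<N. (D m)\<^sup>2) = (\<Sum>m<N. (Cc m)\<^sup>2 - 2 * (S / N) * Cc m + (S/N)\<^sup>2)"
      by (rule sum.cong) (auto simp: Deq power2_eq_square algebra_simps)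
    also have "\<dots> = (\<Sum>m<N. (Cc m)\<^sup>2) - 2 * (S / N) * S + N * (S/N)\<^sup>2"
      by (simp add: sum.distrib sum_subtractf sumC flip: sum_divide_distrib sum_distrib_left)
    also have "\<dots> = (\<Sum>m<N. (Cc m)\<^sup>2) - S\<^sup>2 / N"
      using Npos by (simp add: power2_eq_square field_simps)
    finally show ?thesis .
  qed
  have CS: "(D m)\<^sup>2 \<le> N * (\<Sum>n<N. (y n m)\<^sup>2)" for m
    using sum_squared_le_sum_of_squares[of "\<lambda>n. y n m" "{..<N}"] by (simp add: D_def mult.commute)
  have "(\<Sum>m<N. (D m)\<^sup>2) \<le> (\<Sum>m<N. N * (\<Sum>n<N. (y n m)\<^sup>2))"
    by (rule sum_mono) (rule CS)
  also have "\<dots> = N * (\<Sum>n<N. \<Sum>m<N. (y n m)\<^sup>2)"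
    by (simp add: sum_distrib_left[symmetric]) (rule disjI2, rule sum.swap)
  finally have A: "(\<Sum>m<N. (D m)\<^sup>2) \<le> N * (\<Sum>n<N. \<Sum>m<N. (y n m)\<^sup>2)" .
  have B: "N * (\<Sum>n<N. \<Sum>m<N. (x n m)\<^sup>2) = N * (\<Sum>n<N. \<Sum>m<N. (y n m)\<^sup>2) + (\<Sum>n<N. (R n)\<^sup>2)"
    using Npos by (simp add: rowsq sum.distrib sum_divide_distrib[symmetric] distrib_left)
  have "S\<^sup>2 / N \<le> S\<^sup>2" using N by (simp add: divide_le_eq mult_le_cancel_left1)
  moreover have "S\<^sup>2 = (sum R {..<N})\<^sup>2" by (simp add: S_def R_def)
  ultimately show ?thesis using A B Dsq
    unfolding R_def[symmetric] Cc_def[symmetric] S_def[symmetric] by linarith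
qed
lemma triple: "(\<Sum>n<N. a n) * (\<Sum>k<N. \<Sum>m<N. g k m) = (\<Sum>k<N. \<Sum>n<N. \<Sum>m<N. (a n * g k m)::real)"
  by (simp add: sum_distrib_left sum_distrib_right) (rule sum.cong[OF refl], rule sum.swap)
lemma ent1: "En N (\<lambda>n. \<alpha> n i * \<alpha> n j) * En N (\<lambda>k. \<Sum>m<N. \<gamma> k m i * \<gamma> k m j)
   = (\<Sum>k<N. \<Sum>n<N. \<Sum>m<N. (\<alpha> n i * \<gamma> k m i) * (\<alpha> n j * \<gamma> k m j)) / (real N)^2"
  using triple[of "\<lambda>n. \<alpha> n i * \<alpha> n j" N "\<lambda>k m. \<gamma> k m i * \<gamma> k m j"]
  by (simp add: En_def power2_eq_square mult_ac)

lemma prodsum: "(\<Sum>n<N. \<Sum>m<N. a n * g m) = (\<Sum>n<N. a n) * (\<Sum>m<N. (g m::real))"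
  by (simp add: sum_product)

lemma ent2: "En N (\<lambda>n. \<alpha> n i) * En N (\<lambda>n. \<alpha> n j) * En N (\<lambda>k. (\<Sum>m<N. \<gamma> k m i) * (\<Sum>m<N. \<gamma> k m j))
   = (\<Sum>k<N. (\<Sum>n<N. \<Sum>m<N. \<alpha> n i * \<gamma> k m i) * (\<Sum>n<N. \<Sum>m<N. \<alpha> n j * \<gamma> k m j)) / (real N)^3"
proof -
  define A where "A = (\<Sum>n<N. \<alpha> n i)"
  define B where "B = (\<Sum>n<N. \<alpha> n j)"
  define G where "G k = (\<Sum>m<N. \<gamma> k m i)" for k
  define H where "H k = (\<Sum>m<N. \<gamma> k m j)" for k
  have "(\<Sum>k<N. (\<Sum>n<N. \<Sum>m<N. \<alpha> n i * \<gamma> k m i) * (\<Sum>n<N. \<Sum>m<N. \<alpha> n j * \<gamma> k m j))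
      = (\<Sum>k<N. (A * G k) * (B * H k))"
    unfolding prodsum A_def B_def G_def H_def ..
  also have "\<dots> = A * B * (\<Sum>k<N. G k * H k)"
    by (simp add: sum_distrib_left mult_ac)
  finally have e: "(\<Sum>k<N. (\<Sum>n<N. \<Sum>m<N. \<alpha> n i * \<gamma> k m i) * (\<Sum>n<N. \<Sum>m<N. \<alpha> n j * \<gamma> k m j))
      = A * B * (\<Sum>k<N. G k * H k)" .
  show ?thesis unfolding e unfolding En_def A_def[symmetric] B_def[symmetric] G_def[symmetric] H_def[symmetric]
    by (simp add: power3_eq_cube)
qed

lemma ent3: "En N (\<lambda>n. \<alpha> n i * \<alpha> n j) * En N (\<lambda>k. (\<Sum>m<N. \<gamma> k m i) * (\<Sum>m<N. \<gamma> k m j))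
   = (\<Sum>k<N. \<Sum>n<N. (\<Sum>m<N. \<alpha> n i * \<gamma> k m i) * (\<Sum>m<N. \<alpha> n j * \<gamma> k m j)) / (real N)^2"
proof -
  define G where "G k = (\<Sum>m<N. \<gamma> k m i)" for k
  define H where "H k = (\<Sum>m<N. \<gamma> k m j)" for k
  have gi: "(\<Sum>m<N. \<alpha> n i * \<gamma> k m i) = \<alpha> n i * G k" for n k by (simp add: G_def sum_distrib_left)
  have hj: "(\<Sum>m<N. \<alpha> n j * \<gamma> k m j) = \<alpha> n j * H k" for n k by (simp add: H_def sum_distrib_left)
  have "(\<Sum>k<N. \<Sum>n<N. (\<Sum>m<N. \<alpha> n i * \<gamma> k m i) * (\<Sum>m<N. \<alpha> n j * \<gamma> k m j))
      = (\<Sum>k<N. \<Sum>n<N. (\<alpha> n i * \<alpha> n j) * (G k * H k))"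
    unfolding gi hj by (simp add: mult_ac)
  also have "\<dots> = (\<Sum>n<N. \<Sum>k<N. (\<alpha> n i * \<alpha> n j) * (G k * H k))" by (rule sum.swap)
  also have "\<dots> = (\<Sum>n<N. \<alpha> n i * \<alpha> n j) * (\<Sum>k<N. G k * H k)" by (rule sum_product[symmetric])
  finally have e: "(\<Sum>k<N. \<Sum>n<N. (\<Sum>m<N. \<alpha> n i * \<gamma> k m i) * (\<Sum>m<N. \<alpha> n j * \<gamma> k m j))
      = (\<Sum>n<N. \<alpha> n i * \<alpha> n j) * (\<Sum>k<N. G k * H k)" .
  show ?thesis unfolding e unfolding En_def G_def[symmetric] H_def[symmetric]
    by (simp add: power2_eq_square)
qed
lemma ent4: "En N (\<lambda>n. \<alpha> n i) * En N (\<lambda>n. \<alpha> n j) * En N (\<lambda>k. \<Sum>m<N. \<gamma> k m i * \<gamma> k m j)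
   = (\<Sum>k<N. \<Sum>m<N. (\<Sum>n<N. \<alpha> n i * \<gamma> k m i) * (\<Sum>n<N. \<alpha> n j * \<gamma> k m j)) / (real N)^3"
proof -
  define A where "A = (\<Sum>n<N. \<alpha> n i)"
  define B where "B = (\<Sum>n<N. \<alpha> n j)"
  have gi: "(\<Sum>n<N. \<alpha> n i * \<gamma> k m i) = A * \<gamma> k m i" for m k by (simp add: A_def sum_distrib_right)
  have hj: "(\<Sum>n<N. \<alpha> n j * \<gamma> k m j) = B * \<gamma> k m j" for m k by (simp add: B_def sum_distrib_right)
  have "(\<Sum>k<N. \<Sum>m<N. (\<Sum>n<N. \<alpha> n i * \<gamma> k m i) * (\<Sum>n<N. \<alpha> n j * \<gamma> k m j))
      = (\<Sum>k<N. \<Sum>m<N. (A * B) * (\<gamma> k m i * \<gamma> k m j))"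
    unfolding gi hj by (simp add: mult_ac)
  also have "\<dots> = A * B * (\<Sum>k<N. \<Sum>m<N. \<gamma> k m i * \<gamma> k m j)"
    by (simp add: sum_distrib_left)
  finally have e: "(\<Sum>k<N. \<Sum>m<N. (\<Sum>n<N. \<alpha> n i * \<gamma> k m i) * (\<Sum>n<N. \<alpha> n j * \<gamma> k m j))
      = A * B * (\<Sum>k<N. \<Sum>m<N. \<gamma> k m i * \<gamma> k m j)" .
  show ?thesis unfolding e unfolding En_def A_def[symmetric] B_def[symmetric]
    by (simp add: power3_eq_cube)
qed

lemma pw:
  fixes v :: "'i \<Rightarrow> real" and \<alpha> :: "nat \<Rightarrow> 'i \<Rightarrow> real" and \<gamma> :: "nat \<Rightarrow> nat \<Rightarrow> 'i \<Rightarrow> real"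
  assumes N: "N \<ge> 1" and c0: "0 \<le> c" and c1: "c * (real N - 1) \<le> 1"
  shows "0 \<le> (\<Sum>i\<in>I. \<Sum>j\<in>I. v i * v j *
     (En N (\<lambda>n. \<alpha> n i * \<alpha> n j) * En N (\<lambda>k. \<Sum>m<N. \<gamma> k m i * \<gamma> k m j)
      + c * ((real N * (En N (\<lambda>n. \<alpha> n i) * En N (\<lambda>n. \<alpha> n j)) - En N (\<lambda>n. \<alpha> n i * \<alpha> n j))
           * (En N (\<lambda>k. (\<Sum>m<N. \<gamma> k m i) * (\<Sum>m<N. \<gamma> k m j)) - En N (\<lambda>k. \<Sum>m<N. \<gamma> k m i * \<gamma> k m j)))))"
proof -
  define x where "x k n m = (\<Sum>i\<in>I. v i * (\<alpha> n i * \<gamma> k m i))" for k n m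
  define EA where "EA i j = En N (\<lambda>n. \<alpha> n i * \<alpha> n j)" for i j
  define EA' where "EA' i j = En N (\<lambda>n. \<alpha> n i) * En N (\<lambda>n. \<alpha> n j)" for i j
  define EH where "EH i j = En N (\<lambda>k. \<Sum>m<N. \<gamma> k m i * \<gamma> k m j)" for i j
  define EH2 where "EH2 i j = En N (\<lambda>k. (\<Sum>m<N. \<gamma> k m i) * (\<Sum>m<N. \<gamma> k m j))" for i j
  have T1: "(\<Sum>i\<in>I. \<Sum>j\<in>I. v i * v j * (EA i j * EH i j)) = (\<Sum>k<N. \<Sum>n<N. \<Sum>m<N. (x k n m)\<^sup>2) / (real N)^2"
    unfolding EA_def EH_def ent1 divN swapij rank1 x_def power2_eq_square ..
  have T2: "(\<Sum>i\<in>I. \<Sum>j\<in>I. v i * v j * (EA' i j * EH2 i j)) = (\<Sum>k<N. (\<Sum>n<N. \<Sum>m<N. x k n m)\<^sup>2) / (real N)^3"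
    unfolding EA'_def EH2_def ent2 divN swapij rank1 unfolding lin2 x_def power2_eq_square ..
  have T3: "(\<Sum>i\<in>I. \<Sum>j\<in>I. v i * v j * (EA i j * EH2 i j)) = (\<Sum>k<N. \<Sum>n<N. (\<Sum>m<N. x k n m)\<^sup>2) / (real N)^2"
    unfolding EA_def EH2_def ent3 divN swapij rank1 unfolding lin1 x_def power2_eq_square ..
  have T4: "(\<Sum>i\<in>I. \<Sum>j\<in>I. v i * v j * (EA' i j * EH i j)) = (\<Sum>k<N. \<Sum>m<N. (\<Sum>n<N. x k n m)\<^sup>2) / (real N)^3"
    unfolding EA'_def EH_def ent4 divN swapij rank1 unfolding lin1 x_def power2_eq_square ..
  have split: "(\<Sum>i\<in>I. \<Sum>j\<in>I. v i * v j * (EA i j * EH i j + c * ((real N * EA' i j - EA i j) * (EH2 i j - EH i j))))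
     = (1 + c) * (\<Sum>i\<in>I. \<Sum>j\<in>I. v i * v j * (EA i j * EH i j))
       + c * real N * (\<Sum>i\<in>I. \<Sum>j\<in>I. v i * v j * (EA' i j * EH2 i j))
       - c * real N * (\<Sum>i\<in>I. \<Sum>j\<in>I. v i * v j * (EA' i j * EH i j))
       - c * (\<Sum>i\<in>I. \<Sum>j\<in>I. v i * v j * (EA i j * EH2 i j))"
    by (simp add: sum_distrib_left sum.distrib sum_subtractf algebra_simps)
  have Npos: "real N > 0" using N by simp
  have perk: "0 \<le> (1 + c) * (\<Sum>n<N. \<Sum>m<N. (x k n m)\<^sup>2) + c * (\<Sum>n<N. \<Sum>m<N. x k n m)\<^sup>2
       - c * (\<Sum>m<N. (\<Sum>n<N. x k n m)\<^sup>2) - c * (\<Sum>n<N. (\<Sum>m<N. x k n m)\<^sup>2)" for k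
  proof -
    have M: "0 \<le> real N * (\<Sum>n<N. \<Sum>m<N. (x k n m)\<^sup>2) + (\<Sum>n<N. \<Sum>m<N. x k n m)\<^sup>2
            - (\<Sum>n<N. (\<Sum>m<N. x k n m)\<^sup>2) - (\<Sum>m<N. (\<Sum>n<N. x k n m)\<^sup>2)"
      by (rule mat_ineq[OF N])
    have Q0: "0 \<le> (\<Sum>n<N. \<Sum>m<N. (x k n m)\<^sup>2)" by (intro sum_nonneg) simp
    define Q where "Q = (\<Sum>n<N. \<Sum>m<N. (x k n m)\<^sup>2)"
    define P where "P = (\<Sum>n<N. \<Sum>m<N. x k n m)\<^sup>2 - (\<Sum>n<N. (\<Sum>m<N. x k n m)\<^sup>2) - (\<Sum>m<N. (\<Sum>n<N. x k n m)\<^sup>2)"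
    have M': "0 \<le> real N * Q + P" using M unfolding P_def Q_def by linarith
    have "0 \<le> Q + c * (Q + P)"
    proof -
      have "c * (Q + P) \<ge> c * (- ((real N - 1) * Q))"
        using M' c0 by (intro mult_left_mono) (auto simp: algebra_simps)
      moreover have "c * ((real N - 1) * Q) \<le> Q"
        using mult_right_mono[OF c1 Q0[folded Q_def]] by (simp add: mult.assoc)
      ultimately show ?thesis by (simp add: algebra_simps)
    qed
    then show ?thesis unfolding P_def Q_def by (simp add: algebra_simps)
  qed
  have "(\<Sum>i\<in>I. \<Sum>j\<in>I. v i * v j * (EA i j * EH i j + c * ((real N * EA' i j - EA i j) * (EH2 i j - EH i j))))
    = (\<Sum>k<N. (1 + c) * (\<Sum>n<N. \<Sum>m<N. (x k n m)\<^sup>2) + c * (\<Sum>n<N. \<Sum>m<N. x k n m)\<^sup>2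
       - c * (\<Sum>m<N. (\<Sum>n<N. x k n m)\<^sup>2) - c * (\<Sum>n<N. (\<Sum>m<N. x k n m)\<^sup>2)) / (real N)^2"
    unfolding split T1 T2 T3 T4 using Npos
    by (simp add: sum.distrib sum_subtractf sum_distrib_left power2_eq_square power3_eq_cube field_simps)
  also have "\<dots> \<ge> 0" by (intro divide_nonneg_nonneg sum_nonneg perk) simp
  finally show ?thesis unfolding EA_def EA'_def EH_def EH2_def by simp
qed


lemma L2_mult:
  fixes f g :: "'w \<Rightarrow> real"
  assumes [measurable]: "f \<in> borel_measurable M" "g \<in> borel_measurable M"
    and "integrable M (\<lambda>x. (f x)\<^sup>2)" "integrable M (\<lambda>x. (g x)\<^sup>2)"
  shows "integrable M (\<lambda>x. f x * g x)"
proof (rule Bochner_Integration.integrable_bound[where f="\<lambda>x. (f x)\<^sup>2 + (g x)\<^sup>2"])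
  show "integrable M (\<lambda>x. (f x)\<^sup>2 + (g x)\<^sup>2)" using assms(3,4) by simp
  show "(\<lambda>x. f x * g x) \<in> borel_measurable M" by measurable
  show "AE x in M. norm (f x * g x) \<le> norm ((f x)\<^sup>2 + (g x)\<^sup>2)"
  proof (rule AE_I2)
    fix x
    have "2 * \<bar>f x * g x\<bar> \<le> (f x)\<^sup>2 + (g x)\<^sup>2"
      using sum_squares_bound[of "\<bar>f x\<bar>" "\<bar>g x\<bar>"] by (simp add: abs_mult power2_abs)
    moreover have "0 \<le> (f x)\<^sup>2 + (g x)\<^sup>2" by simp
    ultimately show "norm (f x * g x) \<le> norm ((f x)\<^sup>2 + (g x)\<^sup>2)" by simp
  qed
qed

lemma intQ:
  fixes fA fB gH gG :: "'i \<Rightarrow> 'i \<Rightarrow> 'w \<Rightarrow> real" and v :: "'i \<Rightarrow> real"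
  assumes iA: "\<And>i j. i \<in> I \<Longrightarrow> j \<in> I \<Longrightarrow> integrable M (fA i j)"
    and iB: "\<And>i j. i \<in> I \<Longrightarrow> j \<in> I \<Longrightarrow> integrable M (fB i j)"
    and iH: "\<And>i j. i \<in> I \<Longrightarrow> j \<in> I \<Longrightarrow> integrable M (gH i j)"
    and iG: "\<And>i j. i \<in> I \<Longrightarrow> j \<in> I \<Longrightarrow> integrable M (gG i j)"
    and pos: "\<And>w w'. w \<in> space M \<Longrightarrow> w' \<in> space M \<Longrightarrow>
       0 \<le> (\<Sum>i\<in>I. \<Sum>j\<in>I. v i * v j * (fA i j w * gH i j w' + c * (fB i j w * gG i j w')))"
  shows "0 \<le> (\<Sum>i\<in>I. \<Sum>j\<in>I. v i * v j * (integral\<^sup>L M (fA i j) * integral\<^sup>L M (gH i j)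
              + c * (integral\<^sup>L M (fB i j) * integral\<^sup>L M (gG i j))))"
proof -
  have inner: "0 \<le> (\<Sum>i\<in>I. \<Sum>j\<in>I. v i * v j * (fA i j w * integral\<^sup>L M (gH i j) + c * (fB i j w * integral\<^sup>L M (gG i j))))"
    if w: "w \<in> space M" for w
  proof -
    have "(\<Sum>i\<in>I. \<Sum>j\<in>I. v i * v j * (fA i j w * integral\<^sup>L M (gH i j) + c * (fB i j w * integral\<^sup>L M (gG i j))))
       = integral\<^sup>L M (\<lambda>w'. \<Sum>i\<in>I. \<Sum>j\<in>I. v i * v j * (fA i j w * gH i j w' + c * (fB i j w * gG i j w')))"
      using iH iG by (simp add: integral_sum integrable_sum)
    also have "\<dots> \<ge> 0" by (rule Bochner_Integration.integral_nonneg, rule pos[OF w])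
    finally show ?thesis .
  qed
  have "(\<Sum>i\<in>I. \<Sum>j\<in>I. v i * v j * (integral\<^sup>L M (fA i j) * integral\<^sup>L M (gH i j)
              + c * (integral\<^sup>L M (fB i j) * integral\<^sup>L M (gG i j))))
     = integral\<^sup>L M (\<lambda>w. \<Sum>i\<in>I. \<Sum>j\<in>I. v i * v j * (fA i j w * integral\<^sup>L M (gH i j) + c * (fB i j w * integral\<^sup>L M (gG i j))))"
    using iA iB by (simp add: integral_sum integrable_sum)
  also have "\<dots> \<ge> 0" by (rule Bochner_Integration.integral_nonneg, rule inner)
  finally show ?thesis .
qed

theorem theorem3:
  fixes M :: "'w measure" and C :: "nat \<Rightarrow> nat" and L N :: nat
    and abar :: "nat \<Rightarrow> 'w \<Rightarrow> nat \<Rightarrow> nat \<Rightarrow> real"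
    and g :: "nat \<Rightarrow> nat \<Rightarrow> 'w \<Rightarrow> nat \<Rightarrow> nat \<Rightarrow> real"
  assumes "prob_space M"
    and "N \<ge> 1"
    and abar_meas: "\<And>j b n. j < L \<Longrightarrow> b \<le> C j \<Longrightarrow> n < N \<Longrightarrow>
              (\<lambda>w. abar j w b n) \<in> borel_measurable M"
    and abar_L2: "\<And>j b n. j < L \<Longrightarrow> b \<le> C j \<Longrightarrow> n < N \<Longrightarrow>
              integrable M (\<lambda>w. (abar j w b n)\<^sup>2)"
    and abar_ones: "\<And>j w n. j < L \<Longrightarrow> w \<in> space M \<Longrightarrow> n < N \<Longrightarrow> abar j w (C j) n = 1"
    and g_meas: "\<And>n l a m. n < N \<Longrightarrow> 1 \<le> l \<Longrightarrow> l \<le> L \<Longrightarrow> a < C l \<Longrightarrow> m < N \<Longrightarrow>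
              (\<lambda>w. g n l w a m) \<in> borel_measurable M"
    and g_L2: "\<And>n l a m. n < N \<Longrightarrow> 1 \<le> l \<Longrightarrow> l \<le> L \<Longrightarrow> a < C l \<Longrightarrow> m < N \<Longrightarrow>
              integrable M (\<lambda>w. (g n l w a m)\<^sup>2)"
  shows "psd_on (kr_index C L)
     (\<lambda>i j. khatri_rao (Abar_blk M N abar) (H'_blk M N g) i j
        + (1 / real (max (N - 1) 1)) *
          khatri_rao (\<lambda>l l' b d. real N * Abar'_blk M N abar l l' b d - Abar_blk M N abar l l' b d)
                     (\<lambda>l l' a c. H''_blk M N g l l' a c - H'_blk M N g l l' a c) i j)"
proof -
  note N = \<open>N \<ge> 1\<close>
  define I where "I = kr_index C L"
  define c where "c = 1 / real (max (N - 1) 1)"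
  have c0: "0 \<le> c" by (simp add: c_def)
  have c1: "c * (real N - 1) \<le> 1"
  proof (cases "N = 1")
    case True then show ?thesis by (simp add: c_def)
  next
    case False
    then have "max (N - 1) 1 = N - 1" "real (N - 1) = real N - 1" using N by auto
    then show ?thesis using False N by (simp add: c_def)
  qed
  define \<alpha> where "\<alpha> w n i = abar (fst i - 1) w (fst (snd i)) n" for w n and i :: "nat \<times> nat \<times> nat"
  define \<gamma> where "\<gamma> w k m i = g k (fst i) w (snd (snd i)) m" for w k m and i :: "nat \<times> nat \<times> nat"
  define FA where "FA i j = (\<lambda>w. En N (\<lambda>n. \<alpha> w n i * \<alpha> w n j))" for i j
  define FA' where "FA' i j = (\<lambda>w. En N (\<lambda>n. \<alpha> w n i) * En N (\<lambda>n. \<alpha> w n j))" for i j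
  define FH where "FH i j = (\<lambda>w. En N (\<lambda>k. \<Sum>m<N. \<gamma> w k m i * \<gamma> w k m j))" for i j
  define FH2 where "FH2 i j = (\<lambda>w. En N (\<lambda>k. (\<Sum>m<N. \<gamma> w k m i) * (\<Sum>m<N. \<gamma> w k m j)))" for i j
  define K where "K = (\<lambda>i j. khatri_rao (Abar_blk M N abar) (H'_blk M N g) i j
        + (1 / real (max (N - 1) 1)) *
          khatri_rao (\<lambda>l l' b d. real N * Abar'_blk M N abar l l' b d - Abar_blk M N abar l l' b d)
                     (\<lambda>l l' a c. H''_blk M N g l l' a c - H'_blk M N g l l' a c) i j)"
  have Keq: "K i j = integral\<^sup>L M (FA i j) * integral\<^sup>L M (FH i j)
      + c * ((real N * integral\<^sup>L M (FA' i j) - integral\<^sup>L M (FA i j)) * (integral\<^sup>L M (FH2 i j) - integral\<^sup>L M (FH i j)))" for i j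
    by (cases i; cases j) (simp add: K_def khatri_rao_def Abar_blk_def Abar'_blk_def H'_blk_def H''_blk_def
        FA_def FA'_def FH_def FH2_def \<alpha>_def \<gamma>_def c_def)
  have symA: "FA i j = FA j i" "FA' i j = FA' j i" "FH i j = FH j i" "FH2 i j = FH2 j i" for i j
    by (auto simp: FA_def FA'_def FH_def FH2_def mult.commute intro!: ext)
  have sym: "\<forall>i\<in>I. \<forall>j\<in>I. K i j = K j i"
    unfolding Keq using symA by simp
  have memI: "1 \<le> fst i \<and> fst i \<le> L \<and> fst (snd i) \<le> C (fst i - 1) \<and> snd (snd i) < C (fst i)" if "i \<in> I" for i
    using that by (cases i) (auto simp: I_def kr_index_def)
  have am: "(\<lambda>w. \<alpha> w n i) \<in> borel_measurable M" "integrable M (\<lambda>w. (\<alpha> w n i)\<^sup>2)" if "i \<in> I" "n < N" for i n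
    using memI[OF that(1)] that(2) abar_meas abar_L2 unfolding \<alpha>_def by auto
  have gm: "(\<lambda>w. \<gamma> w k m i) \<in> borel_measurable M" "integrable M (\<lambda>w. (\<gamma> w k m i)\<^sup>2)"
    if "i \<in> I" "k < N" "m < N" for i k m
    using memI[OF that(1)] that(2,3) g_meas g_L2 unfolding \<gamma>_def by auto
  have aa: "integrable M (\<lambda>w. \<alpha> w n i * \<alpha> w n' j)" if "i \<in> I" "j \<in> I" "n < N" "n' < N" for i j n n'
    using am that by (intro L2_mult) auto
  have gg: "integrable M (\<lambda>w. \<gamma> w k m i * \<gamma> w k' m' j)" if "i \<in> I" "j \<in> I" "k < N" "m < N" "k' < N" "m' < N" for i j k m k' m'
    using gm that by (intro L2_mult) auto
  have iA: "integrable M (FA i j)" if "i \<in> I" "j \<in> I" for i j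
    unfolding FA_def En_def by (rule integrable_divide_zero, rule Bochner_Integration.integrable_sum, rule aa[OF that]) auto
  have iA': "integrable M (FA' i j)" if "i \<in> I" "j \<in> I" for i j
  proof -
    have e: "FA' i j = (\<lambda>w. (\<Sum>n<N. \<Sum>n'<N. \<alpha> w n i * \<alpha> w n' j) / (real N * real N))"
      by (auto simp: FA'_def En_def sum_product intro!: ext)
    show ?thesis unfolding e by (rule integrable_divide_zero, rule Bochner_Integration.integrable_sum, rule Bochner_Integration.integrable_sum, rule aa[OF that]) auto
  qed
  have iH: "integrable M (FH i j)" if "i \<in> I" "j \<in> I" for i j
    unfolding FH_def En_def by (rule integrable_divide_zero, rule Bochner_Integration.integrable_sum, rule Bochner_Integration.integrable_sum, rule gg[OF that]) auto
  have iH2: "integrable M (FH2 i j)" if "i \<in> I" "j \<in> I" for i j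
  proof -
    have e: "FH2 i j = (\<lambda>w. (\<Sum>k<N. \<Sum>m<N. \<Sum>m'<N. \<gamma> w k m i * \<gamma> w k m' j) / real N)"
      by (auto simp: FH2_def En_def sum_product intro!: ext)
    show ?thesis unfolding e by (rule integrable_divide_zero, rule Bochner_Integration.integrable_sum, rule Bochner_Integration.integrable_sum, rule Bochner_Integration.integrable_sum, rule gg[OF that]) auto
  qed
  have Q: "(\<Sum>i\<in>I. \<Sum>j\<in>I. v i * K i j * v j) =
     (\<Sum>i\<in>I. \<Sum>j\<in>I. v i * v j * (integral\<^sup>L M (FA i j) * integral\<^sup>L M (FH i j)
              + c * (integral\<^sup>L M (\<lambda>w. real N * FA' i j w - FA i j w) * integral\<^sup>L M (\<lambda>w. FH2 i j w - FH i j w))))"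
    for v
  proof (intro sum.cong refl)
    fix i j assume ij: "i \<in> I" "j \<in> I"
    have "integral\<^sup>L M (\<lambda>w. real N * FA' i j w - FA i j w) = real N * integral\<^sup>L M (FA' i j) - integral\<^sup>L M (FA i j)"
      using iA[OF ij] iA'[OF ij] by simp
    moreover have "integral\<^sup>L M (\<lambda>w. FH2 i j w - FH i j w) = integral\<^sup>L M (FH2 i j) - integral\<^sup>L M (FH i j)"
      using iH[OF ij] iH2[OF ij] by simp
    ultimately show "v i * K i j * v j = v i * v j * (integral\<^sup>L M (FA i j) * integral\<^sup>L M (FH i j)
              + c * (integral\<^sup>L M (\<lambda>w. real N * FA' i j w - FA i j w) * integral\<^sup>L M (\<lambda>w. FH2 i j w - FH i j w)))"
      unfolding Keq by (simp add: mult_ac)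
  qed
  have psd: "0 \<le> (\<Sum>i\<in>I. \<Sum>j\<in>I. v i * K i j * v j)" for v
    unfolding Q
  proof (rule intQ)
    show "integrable M (FA i j)" if "i \<in> I" "j \<in> I" for i j using iA that .
    show "integrable M (FH i j)" if "i \<in> I" "j \<in> I" for i j using iH that .
    show "integrable M (\<lambda>w. real N * FA' i j w - FA i j w)" if "i \<in> I" "j \<in> I" for i j
      using iA[OF that] iA'[OF that] by simp
    show "integrable M (\<lambda>w. FH2 i j w - FH i j w)" if "i \<in> I" "j \<in> I" for i j
      using iH[OF that] iH2[OF that] by simp
    fix w w'
    show "0 \<le> (\<Sum>i\<in>I. \<Sum>j\<in>I. v i * v j * (FA i j w * FH i j w' + c * ((real N * FA' i j w - FA i j w) * (FH2 i j w' - FH i j w'))))"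
      unfolding FA_def FA'_def FH_def FH2_def by (rule pw[OF N c0 c1])
  qed
  show ?thesis
    unfolding psd_on_def K_def[symmetric] I_def[symmetric] using sym psd by blast
qed

end
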